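(* Let $\varphi=\nu\tilde n.\sigma$ be a frame and $\mathtt{s}\in\tilde n$ a restricted name of $\varphi$ such that $\varphi\nvdash\mathtt{s}$. If $\varphi$ is a well-formed frame with respect to $\mathtt{s}$, then it is an extended well-formed frame with respect to $\mathtt{s}$.
   Context: Terms over $\Sigma=\{\mathsf{enc}/3,\mathsf{dec}/2,\mathsf{enca}/3,\mathsf{deca}/2,\mathsf{pub}/1,\mathsf{priv}/1,\langle\cdot,\cdot\rangle/2,\pi_1/1,\pi_2/1,\mathsf{sign}/2,\mathsf{check}/3,\mathsf{retrieve}/1\}$, constants, names, variables; destructors are $\pi_1,\pi_2,\mathsf{dec},\mathsf{deca},\mathsf{check},\mathsf{retrieve}$. Equational theory $E$: $\pi_i(\langle z_1,z_2\rangle)=z_i$, $\mathsf{dec}(\mathsf{enc}(z_1,z_2,z_3),z_2)=z_1$, $\mathsf{deca}(\mathsf{enca}(z_1,\mathsf{pub}(z_2),z_3),\mathsf{priv}(z_2))=z_1$, $\mathsf{check}(z_1,\mathsf{sign}(z_1,\mathsf{priv}(z_2)),\mathsf{pub}(z_2))=\mathsf{ok}$, $\mathsf{retrieve}(\mathsf{sign}(z_1,z_2))=z_1$; orienting left to right gives a convergent rewrite system with normal forms. Positions: sequences of positive integers, prefix order $\le$, $T|_p$ subterm, $\mathrm{head}(T)$ root symbol. Frame $\varphi=\nu\tilde n.\sigma$: restricted names $\tilde n$, acyclic substitution $\sigma$. $\varphi\vdash M$: least relation containing $x\sigma$ ($x\in\mathrm{dom}(\sigma)$), names outside $\tilde n$,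 closed under symbols other than $\mathsf{priv}$ and under $=_E$. An encryption occurrence $q$ in $U$ (head of $U|_q$ in $\{\mathsf{enc},\mathsf{enca}\}$) is an agent encryption w.r.t. names $\tilde m$ if $U|_{q\cdot3}\in\tilde m$, a probabilistic encryption w.r.t. a set of terms $S$ if for all $V\in S$ and $p$ with $V|_p=U|_{q\cdot3}$, $p=q'\cdot3$ with $V|_{q'}=U|_q$, and it is plaintext-above a position $q_T$ if $q\cdot1\le q_T$. Well-formed w.r.t. $\mathtt{s}$: (1) every encryption in $\sigma$ is an agent encryption w.r.t. $\tilde n\setminus\{\mathtt{s}\}$ and probabilistic w.r.t. $\mathrm{ran}(\sigma)$; (2) for all subterms $\mathsf{enc}(M,K,R)$, $\mathsf{enca}(M',K',R')$, $\mathsf{sign}(U,V)$, $\mathsf{pub}(W)$, $\mathsf{priv}(W')$ of $\varphi$, $\mathtt{s}$ does not occur in $K,K',V,W,W',R,R'$; (3) no destructor occurs in $\varphi$. Extended well-formed w.r.t. $\mathtt{s}$: (1) all terms of $\sigma$ are in normal form; (2) every agent encryption w.r.t. $\tilde n$ in $\sigma$ is probabilistic w.r.t. $\mathrm{ran}(\sigma)$; (3) for every occurrence $q_{\mathtt{s}}$ of $\mathtt{s}$ in $y\sigma$, $y\in\mathrm{dom}(\sigma)$, some agent encryption w.r.t. $\tilde n\setminus\{\mathtt{s}\}$ is plaintext-above $q_{\mathtt{s}}$; (4) the lowest such encryption $q_0$ satisfies $\mathrm{head}(y\sigma|_q)\in\{\langle\rangle,\mathsf{sign}\}$ for all $q_0<q<q_{\mathtt{s}}$.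 *)

theory Defs
  imports Main
begin

type_synonym name = nat
type_synonym var = nat
type_synonym cst = string

datatype "term" =
    Name name
  | Var var
  | Const cst
  | Enc "term" "term" "term"
  | Dec "term" "term"
  | Enca "term" "term" "term"
  | Deca "term" "term"
  | Pub "term"
  | Priv "term"
  | Pair "term" "term"
  | Pi1 "term"
  | Pi2 "term"
  | Sign "term" "term"
  | Check "term" "term" "term"
  | Retrieve "term"

definition ok :: "term" where "ok = Const ''ok''"

datatype fsym = FEnc | FDec | FEnca | FDeca | FPub | FPriv | FPair | FPi1 | FPi2
  | FSign | FCheck | FRetrieve

fun head :: "term \<Rightarrow> fsym option" where
  "head (Enc a b c) = Some FEnc"
| "head (Dec a b) = Some FDec"
| "head (Enca a b c) = Some FEnca"
| "head (Deca a b) = Some FDeca"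
| "head (Pub a) = Some FPub"
| "head (Priv a) = Some FPriv"
| "head (Pair a b) = Some FPair"
| "head (Pi1 a) = Some FPi1"
| "head (Pi2 a) = Some FPi2"
| "head (Sign a b) = Some FSign"
| "head (Check a b c) = Some FCheck"
| "head (Retrieve a) = Some FRetrieve"
| "head _ = None"

fun args :: "term \<Rightarrow> term list" where
  "args (Enc a b c) = [a, b, c]"
| "args (Dec a b) = [a, b]"
| "args (Enca a b c) = [a, b, c]"
| "args (Deca a b) = [a, b]"
| "args (Pub a) = [a]"
| "args (Priv a) = [a]"
| "args (Pair a b) = [a, b]"
| "args (Pi1 a) = [a]"
| "args (Pi2 a) = [a]"
| "args (Sign a b) = [a, b]"
| "args (Check a b c) = [a, b, c]"
| "args (Retrieve a) = [a]"
| "args _ = []"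

definition destructors :: "fsym set" where
  "destructors = {FPi1, FPi2, FDec, FDeca, FCheck, FRetrieve}"

text \<open>Positions are lists of positive integers; argument indices start at 1.
  subt t p is the subterm of t at p (None if p is not a position of t).\<close>
fun subt :: "term \<Rightarrow> nat list \<Rightarrow> term option" where
  "subt t [] = Some t"
| "subt t (i # p) =
     (if 1 \<le> i \<and> i \<le> length (args t) then subt (args t ! (i - 1)) p else None)"

definition subterms :: "term \<Rightarrow> term set" where
  "subterms t = {u. \<exists>p. subt t p = Some u}"

definition occurs :: "name \<Rightarrow> term \<Rightarrow> bool" where
  "occurs n t \<longleftrightarrow> Name n \<in> subterms t"

definition pos_le :: "nat list \<Rightarrow> nat list \<Rightarrow> bool" where
  "pos_le p q \<longleftrightarrow> (\<exists>r. q = p @ r)"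

definition pos_less :: "nat list \<Rightarrow> nat list \<Rightarrow> bool" where
  "pos_less p q \<longleftrightarrow> pos_le p q \<and> p \<noteq> q"

inductive rstep :: "term \<Rightarrow> term \<Rightarrow> bool" where
  r_pi1: "rstep (Pi1 (Pair z1 z2)) z1"
| r_pi2: "rstep (Pi2 (Pair z1 z2)) z2"
| r_dec: "rstep (Dec (Enc z1 z2 z3) z2) z1"
| r_deca: "rstep (Deca (Enca z1 (Pub z2) z3) (Priv z2)) z1"
| r_check: "rstep (Check z1 (Sign z1 (Priv z2)) (Pub z2)) ok"
| r_retrieve: "rstep (Retrieve (Sign z1 z2)) z1"
| c_enc1: "rstep a a' \<Longrightarrow> rstep (Enc a b c) (Enc a' b c)"
| c_enc2: "rstep b b' \<Longrightarrow> rstep (Enc a b c) (Enc a b' c)"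
| c_enc3: "rstep c c' \<Longrightarrow> rstep (Enc a b c) (Enc a b c')"
| c_dec1: "rstep a a' \<Longrightarrow> rstep (Dec a b) (Dec a' b)"
| c_dec2: "rstep b b' \<Longrightarrow> rstep (Dec a b) (Dec a b')"
| c_enca1: "rstep a a' \<Longrightarrow> rstep (Enca a b c) (Enca a' b c)"
| c_enca2: "rstep b b' \<Longrightarrow> rstep (Enca a b c) (Enca a b' c)"
| c_enca3: "rstep c c' \<Longrightarrow> rstep (Enca a b c) (Enca a b c')"
| c_deca1: "rstep a a' \<Longrightarrow> rstep (Deca a b) (Deca a' b)"
| c_deca2: "rstep b b' \<Longrightarrow> rstep (Deca a b) (Deca a b')"
| c_pub: "rstep a a' \<Longrightarrow> rstep (Pub a) (Pub a')"
| c_priv: "rstep a a' \<Longrightarrow> rstep (Priv a) (Priv a')"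
| c_pair1: "rstep a a' \<Longrightarrow> rstep (Pair a b) (Pair a' b)"
| c_pair2: "rstep b b' \<Longrightarrow> rstep (Pair a b) (Pair a b')"
| c_pi1: "rstep a a' \<Longrightarrow> rstep (Pi1 a) (Pi1 a')"
| c_pi2: "rstep a a' \<Longrightarrow> rstep (Pi2 a) (Pi2 a')"
| c_sign1: "rstep a a' \<Longrightarrow> rstep (Sign a b) (Sign a' b)"
| c_sign2: "rstep b b' \<Longrightarrow> rstep (Sign a b) (Sign a b')"
| c_check1: "rstep a a' \<Longrightarrow> rstep (Check a b c) (Check a' b c)"
| c_check2: "rstep b b' \<Longrightarrow> rstep (Check a b c) (Check a b' c)"
| c_check3: "rstep c c' \<Longrightarrow> rstep (Check a b c) (Check a b c')"
| c_retrieve: "rstep a a' \<Longrightarrow> rstep (Retrieve a) (Retrieve a')"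

text \<open>=_E is the equivalence closure of the rewrite relation (equivalently, the
  least congruence containing the equations of E).\<close>
definition eqE :: "term \<Rightarrow> term \<Rightarrow> bool" where
  "eqE = (sup rstep rstep\<inverse>\<inverse>)\<^sup>*\<^sup>*"

definition normal_form :: "term \<Rightarrow> bool" where
  "normal_form t \<longleftrightarrow> \<not> (\<exists>u. rstep t u)"

text \<open>A frame nu ns. sigma: restricted names ns and substitution sigma.\<close>
type_synonym frame = "name set \<times> (var \<rightharpoonup> term)"

fun vars :: "term \<Rightarrow> var set" where
  "vars (Var x) = {x}"
| "vars (Name n) = {}"
| "vars (Const c) = {}"
| "vars t = (\<Union>u\<in>set (args t). vars u)"

definition acyclic_subst :: "(var \<rightharpoonup> term) \<Rightarrow> bool" where
  "acyclic_subst \<sigma> \<longleftrightarrow>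
     wf {(y, x). \<exists>t. \<sigma> x = Some t \<and> y \<in> vars t}"

definition is_frame :: "frame \<Rightarrow> bool" where
  "is_frame \<phi> \<longleftrightarrow> finite (fst \<phi>) \<and> finite (dom (snd \<phi>)) \<and> acyclic_subst (snd \<phi>)"

inductive ded :: "frame \<Rightarrow> term \<Rightarrow> bool" for \<phi> :: frame where
  d_var: "snd \<phi> x = Some t \<Longrightarrow> ded \<phi> t"
| d_name: "n \<notin> fst \<phi> \<Longrightarrow> ded \<phi> (Name n)"
| d_const: "ded \<phi> (Const c)"
| d_enc: "ded \<phi> a \<Longrightarrow> ded \<phi> b \<Longrightarrow> ded \<phi> c \<Longrightarrow> ded \<phi> (Enc a b c)"
| d_dec: "ded \<phi> a \<Longrightarrow> ded \<phi> b \<Longrightarrow> ded \<phi> (Dec a b)"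
| d_enca: "ded \<phi> a \<Longrightarrow> ded \<phi> b \<Longrightarrow> ded \<phi> c \<Longrightarrow> ded \<phi> (Enca a b c)"
| d_deca: "ded \<phi> a \<Longrightarrow> ded \<phi> b \<Longrightarrow> ded \<phi> (Deca a b)"
| d_pub: "ded \<phi> a \<Longrightarrow> ded \<phi> (Pub a)"
| d_pair: "ded \<phi> a \<Longrightarrow> ded \<phi> b \<Longrightarrow> ded \<phi> (Pair a b)"
| d_pi1: "ded \<phi> a \<Longrightarrow> ded \<phi> (Pi1 a)"
| d_pi2: "ded \<phi> a \<Longrightarrow> ded \<phi> (Pi2 a)"
| d_sign: "ded \<phi> a \<Longrightarrow> ded \<phi> b \<Longrightarrow> ded \<phi> (Sign a b)"
| d_check: "ded \<phi> a \<Longrightarrow> ded \<phi> b \<Longrightarrow> ded \<phi> c \<Longrightarrow> ded \<phi> (Check a b c)"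
| d_retrieve: "ded \<phi> a \<Longrightarrow> ded \<phi> (Retrieve a)"
| d_eq: "ded \<phi> M \<Longrightarrow> eqE M N \<Longrightarrow> ded \<phi> N"

definition enc_occ :: "term \<Rightarrow> nat list \<Rightarrow> bool" where
  "enc_occ U q \<longleftrightarrow> (\<exists>T. subt U q = Some T \<and> head T \<in> {Some FEnc, Some FEnca})"

definition agent_enc :: "name set \<Rightarrow> term \<Rightarrow> nat list \<Rightarrow> bool" where
  "agent_enc ms U q \<longleftrightarrow> enc_occ U q \<and> (\<exists>m\<in>ms. subt U (q @ [3]) = Some (Name m))"

definition prob_enc :: "term set \<Rightarrow> term \<Rightarrow> nat list \<Rightarrow> bool" where
  "prob_enc S U q \<longleftrightarrow> enc_occ U q \<and>
     (\<forall>V\<in>S. \<forall>p. subt V p = subt U (q @ [3]) \<longrightarrow>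
        (\<exists>q'. p = q' @ [3] \<and> subt V q' = subt U q))"

definition plaintext_above :: "term \<Rightarrow> nat list \<Rightarrow> nat list \<Rightarrow> bool" where
  "plaintext_above U q qT \<longleftrightarrow> enc_occ U q \<and> pos_le (q @ [1]) qT"

definition subterms_frame :: "frame \<Rightarrow> term set" where
  "subterms_frame \<phi> = (\<Union>t\<in>ran (snd \<phi>). subterms t)"

definition well_formed :: "frame \<Rightarrow> name \<Rightarrow> bool" where
  "well_formed \<phi> s \<longleftrightarrow>
    (\<forall>y t q. snd \<phi> y = Some t \<longrightarrow> enc_occ t q \<longrightarrow>
        agent_enc (fst \<phi> - {s}) t q \<and> prob_enc (ran (snd \<phi>)) t q)
  \<and> (\<forall>u\<in>subterms_frame \<phi>.
        (\<forall>M K R. u = Enc M K R \<longrightarrow> \<not> occurs s K \<and> \<not> occurs s R)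
      \<and> (\<forall>M K R. u = Enca M K R \<longrightarrow> \<not> occurs s K \<and> \<not> occurs s R)
      \<and> (\<forall>U V. u = Sign U V \<longrightarrow> \<not> occurs s V)
      \<and> (\<forall>W. u = Pub W \<longrightarrow> \<not> occurs s W)
      \<and> (\<forall>W. u = Priv W \<longrightarrow> \<not> occurs s W))
  \<and> (\<forall>u\<in>subterms_frame \<phi>. \<forall>f. head u = Some f \<longrightarrow> f \<notin> destructors)"

definition ext_well_formed :: "frame \<Rightarrow> name \<Rightarrow> bool" where
  "ext_well_formed \<phi> s \<longleftrightarrow>
    (\<forall>t\<in>ran (snd \<phi>). normal_form t)
  \<and> (\<forall>y t q. snd \<phi> y = Some t \<longrightarrow> agent_enc (fst \<phi>) t q \<longrightarrow>
        prob_enc (ran (snd \<phi>)) t q)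
  \<and> (\<forall>y t qs. snd \<phi> y = Some t \<longrightarrow> subt t qs = Some (Name s) \<longrightarrow>
        (\<exists>q. agent_enc (fst \<phi> - {s}) t q \<and> plaintext_above t q qs))
  \<and> (\<forall>y t qs q0. snd \<phi> y = Some t \<longrightarrow> subt t qs = Some (Name s) \<longrightarrow>
        agent_enc (fst \<phi> - {s}) t q0 \<longrightarrow> plaintext_above t q0 qs \<longrightarrow>
        (\<forall>q'. agent_enc (fst \<phi> - {s}) t q' \<and> plaintext_above t q' qs \<longrightarrow> pos_le q' q0) \<longrightarrow>
        (\<forall>q T. pos_less q0 q \<longrightarrow> pos_less q qs \<longrightarrow> subt t q = Some T \<longrightarrow>
            head T \<in> {Some FPair, Some FSign}))"

end

theory Submission
  imports Defs
begin

lemma subt_append: "subt t (p @ q) = (case subt t p of Some u \<Rightarrow> subt u q | None \<Rightarrow> None)"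
  by (induction p arbitrary: t) auto

lemma subterms_trans: "u \<in> subterms t \<Longrightarrow> subt u q = Some v \<Longrightarrow> v \<in> subterms t"
  unfolding subterms_def by (auto simp: subt_append intro: exI[of _ "_ @ q"])
    (metis option.simps(5) subt_append)

lemma rstep_destr: "rstep u v \<Longrightarrow> \<exists>p w. subt u p = Some w \<and> (\<exists>f. head w = Some f \<and> f \<in> destructors)"
proof (induction rule: rstep.induct)
  case (c_enc1 a a' b c) then obtain p w where "subt a p = Some w" "\<exists>f. head w = Some f \<and> f \<in> destructors" by blast
  then show ?case by (intro exI[of _ "1#p"] exI[of _ w]) simp
next
  case (c_enc2 b b' a c) then obtain p w where "subt b p = Some w" "\<exists>f. head w = Some f \<and> f \<in> destructors" by blast
  then show ?case by (intro exI[of _ "2#p"] exI[of _ w]) simp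
next
  case (c_enc3 c c' a b) then obtain p w where "subt c p = Some w" "\<exists>f. head w = Some f \<and> f \<in> destructors" by blast
  then show ?case by (intro exI[of _ "3#p"] exI[of _ w]) simp
next
  case (c_dec1 a a' b) then obtain p w where "subt a p = Some w" "\<exists>f. head w = Some f \<and> f \<in> destructors" by blast
  then show ?case by (intro exI[of _ "1#p"] exI[of _ w]) simp
next
  case (c_dec2 b b' a) then obtain p w where "subt b p = Some w" "\<exists>f. head w = Some f \<and> f \<in> destructors" by blast
  then show ?case by (intro exI[of _ "2#p"] exI[of _ w]) simp
next
  case (c_enca1 a a' b c) then obtain p w where "subt a p = Some w" "\<exists>f. head w = Some f \<and> f \<in> destructors" by blast
  then show ?case by (intro exI[of _ "1#p"] exI[of _ w]) simp
next
  case (c_enca2 b b' a c) then obtain p w where "subt b p = Some w" "\<exists>f. head w = Some f \<and> f \<in> destructors" by blast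
  then show ?case by (intro exI[of _ "2#p"] exI[of _ w]) simp
next
  case (c_enca3 c c' a b) then obtain p w where "subt c p = Some w" "\<exists>f. head w = Some f \<and> f \<in> destructors" by blast
  then show ?case by (intro exI[of _ "3#p"] exI[of _ w]) simp
next
  case (c_deca1 a a' b) then obtain p w where "subt a p = Some w" "\<exists>f. head w = Some f \<and> f \<in> destructors" by blast
  then show ?case by (intro exI[of _ "1#p"] exI[of _ w]) simp
next
  case (c_deca2 b b' a) then obtain p w where "subt b p = Some w" "\<exists>f. head w = Some f \<and> f \<in> destructors" by blast
  then show ?case by (intro exI[of _ "2#p"] exI[of _ w]) simp
next
  case (c_pub a a') then obtain p w where "subt a p = Some w" "\<exists>f. head w = Some f \<and> f \<in> destructors" by blast
  then show ?case by (intro exI[of _ "1#p"] exI[of _ w]) simp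
next
  case (c_priv a a') then obtain p w where "subt a p = Some w" "\<exists>f. head w = Some f \<and> f \<in> destructors" by blast
  then show ?case by (intro exI[of _ "1#p"] exI[of _ w]) simp
next
  case (c_pair1 a a' b) then obtain p w where "subt a p = Some w" "\<exists>f. head w = Some f \<and> f \<in> destructors" by blast
  then show ?case by (intro exI[of _ "1#p"] exI[of _ w]) simp
next
  case (c_pair2 b b' a) then obtain p w where "subt b p = Some w" "\<exists>f. head w = Some f \<and> f \<in> destructors" by blast
  then show ?case by (intro exI[of _ "2#p"] exI[of _ w]) simp
next
  case (c_pi1 a a') then obtain p w where "subt a p = Some w" "\<exists>f. head w = Some f \<and> f \<in> destructors" by blast
  then show ?case by (intro exI[of _ "1#p"] exI[of _ w]) simp
next
  case (c_pi2 a a') then obtain p w where "subt a p = Some w" "\<exists>f. head w = Some f \<and> f \<in> destructors" by blast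
  then show ?case by (intro exI[of _ "1#p"] exI[of _ w]) simp
next
  case (c_sign1 a a' b) then obtain p w where "subt a p = Some w" "\<exists>f. head w = Some f \<and> f \<in> destructors" by blast
  then show ?case by (intro exI[of _ "1#p"] exI[of _ w]) simp
next
  case (c_sign2 b b' a) then obtain p w where "subt b p = Some w" "\<exists>f. head w = Some f \<and> f \<in> destructors" by blast
  then show ?case by (intro exI[of _ "2#p"] exI[of _ w]) simp
next
  case (c_check1 a a' b c) then obtain p w where "subt a p = Some w" "\<exists>f. head w = Some f \<and> f \<in> destructors" by blast
  then show ?case by (intro exI[of _ "1#p"] exI[of _ w]) simp
next
  case (c_check2 b b' a c) then obtain p w where "subt b p = Some w" "\<exists>f. head w = Some f \<and> f \<in> destructors" by blast
  then show ?case by (intro exI[of _ "2#p"] exI[of _ w]) simp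
next
  case (c_check3 c c' a b) then obtain p w where "subt c p = Some w" "\<exists>f. head w = Some f \<and> f \<in> destructors" by blast
  then show ?case by (intro exI[of _ "3#p"] exI[of _ w]) simp
next
  case (c_retrieve a a') then obtain p w where "subt a p = Some w" "\<exists>f. head w = Some f \<and> f \<in> destructors" by blast
  then show ?case by (intro exI[of _ "1#p"] exI[of _ w]) simp
qed (auto intro!: exI[of _ "[]"] simp: destructors_def)

lemma eqE_step: "rstep a b \<Longrightarrow> eqE a b"
  unfolding eqE_def by (simp add: r_into_rtranclp)

lemma sf_sub: "u \<in> subterms_frame \<phi> \<Longrightarrow> subt u q = Some v \<Longrightarrow> v \<in> subterms_frame \<phi>"
  unfolding subterms_frame_def using subterms_trans by blast

lemma occ_of: "subt a r = Some (Name s) \<Longrightarrow> occurs s a"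
  unfolding occurs_def subterms_def by blast

lemma lemA:
  assumes wf: "well_formed \<phi> s"
  shows "ded \<phi> u \<Longrightarrow> u \<in> subterms_frame \<phi> \<Longrightarrow> subt u p = Some (Name s) \<Longrightarrow>
     (\<forall>q. enc_occ u q \<longrightarrow> \<not> pos_le (q @ [1]) p) \<Longrightarrow> ded \<phi> (Name s)"
proof (induction p arbitrary: u)
  case Nil then show ?case by simp
next
  case (Cons i p)
  note wf2 = wf[unfolded well_formed_def, THEN conjunct2, THEN conjunct1, rule_format, OF Cons.prems(2)]
  note wf3 = wf[unfolded well_formed_def, THEN conjunct2, THEN conjunct2, rule_format, OF Cons.prems(2)]
  have sub1: "\<And>q v. subt u q = Some v \<Longrightarrow> v \<in> subterms_frame \<phi>" using sf_sub Cons.prems(2) by blast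
  show ?case
  proof (cases u)
    case (Enc a b c)
    have "i = 1 \<or> i = 2 \<or> i = 3" using Cons.prems(3) Enc by (auto split: if_splits)
    moreover have "i \<noteq> 1" using Cons.prems(4)[rule_format, of "[]"] Enc
      by (auto simp: enc_occ_def pos_le_def)
    moreover have "i \<noteq> 2" using wf2 Cons.prems(3) Enc occ_of by auto
    moreover have "i \<noteq> 3" using wf2 Cons.prems(3) Enc occ_of by auto
    ultimately show ?thesis by blast
  next
    case (Enca a b c)
    have "i = 1 \<or> i = 2 \<or> i = 3" using Cons.prems(3) Enca by (auto split: if_splits)
    moreover have "i \<noteq> 1" using Cons.prems(4)[rule_format, of "[]"] Enca
      by (auto simp: enc_occ_def pos_le_def)
    moreover have "i \<noteq> 2" using wf2 Cons.prems(3) Enca occ_of by auto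
    moreover have "i \<noteq> 3" using wf2 Cons.prems(3) Enca occ_of by auto
    ultimately show ?thesis by blast
  next
    case (Pub a) then show ?thesis using wf2 Cons.prems(3) occ_of by (auto split: if_splits)
  next
    case (Priv a) then show ?thesis using wf2 Cons.prems(3) occ_of by (auto split: if_splits)
  next
    case (Pair a b)
    show ?thesis
    proof (cases "i = 1")
      case True
      have "ded \<phi> (Pi1 (Pair a b))" using d_pi1[OF Cons.prems(1)] Pair by simp
      then have "ded \<phi> a" using d_eq eqE_step[OF r_pi1] by blast
      moreover have "a \<in> subterms_frame \<phi>" using sub1[of "[1]"] Pair by simp
      moreover have "subt a p = Some (Name s)" using Cons.prems(3) Pair True by simp
      moreover have "\<forall>q. enc_occ a q \<longrightarrow> \<not> pos_le (q @ [1]) p"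
      proof (intro allI impI notI)
        fix q assume "enc_occ a q" "pos_le (q @ [1]) p"
        then have "enc_occ u (1#q)" "pos_le ((1#q) @ [1]) (i#p)" using Pair True
          by (auto simp: enc_occ_def pos_le_def)
        then show False using Cons.prems(4) by blast
      qed
      ultimately show ?thesis using Cons.IH by blast
    next
      case False
      then have T: "i = 2" using Cons.prems(3) Pair by (auto split: if_splits)
      have "ded \<phi> (Pi2 (Pair a b))" using d_pi2[OF Cons.prems(1)] Pair by simp
      then have "ded \<phi> b" using d_eq eqE_step[OF r_pi2] by blast
      moreover have "b \<in> subterms_frame \<phi>" using sub1[of "[2]"] Pair by simp
      moreover have "subt b p = Some (Name s)" using Cons.prems(3) Pair T by simp
      moreover have "\<forall>q. enc_occ b q \<longrightarrow> \<not> pos_le (q @ [1]) p"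
      proof (intro allI impI notI)
        fix q assume "enc_occ b q" "pos_le (q @ [1]) p"
        then have "enc_occ u (2#q)" "pos_le ((2#q) @ [1]) (i#p)" using Pair T
          by (auto simp: enc_occ_def pos_le_def)
        then show False using Cons.prems(4) by blast
      qed
      ultimately show ?thesis using Cons.IH by blast
    qed
  next
    case (Sign a b)
    show ?thesis
    proof (cases "i = 1")
      case True
      have "ded \<phi> (Retrieve (Sign a b))" using d_retrieve[OF Cons.prems(1)] Sign by simp
      then have "ded \<phi> a" using d_eq eqE_step[OF r_retrieve] by blast
      moreover have "a \<in> subterms_frame \<phi>" using sub1[of "[1]"] Sign by simp
      moreover have "subt a p = Some (Name s)" using Cons.prems(3) Sign True by simp
      moreover have "\<forall>q. enc_occ a q \<longrightarrow> \<not> pos_le (q @ [1]) p"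
      proof (intro allI impI notI)
        fix q assume "enc_occ a q" "pos_le (q @ [1]) p"
        then have "enc_occ u (1#q)" "pos_le ((1#q) @ [1]) (i#p)" using Sign True
          by (auto simp: enc_occ_def pos_le_def)
        then show False using Cons.prems(4) by blast
      qed
      ultimately show ?thesis using Cons.IH by blast
    next
      case False
      then have "i = 2" using Cons.prems(3) Sign by (auto split: if_splits)
      then show ?thesis using wf2 Cons.prems(3) occ_of Sign by auto
    qed
  qed (use Cons.prems(3) wf3 in \<open>simp_all add: destructors_def split: if_splits\<close>)
qed

theorem lemma2p12:
  fixes \<phi> :: frame and s :: name
  assumes "is_frame \<phi>"
    and "s \<in> fst \<phi>"
    and "\<not> ded \<phi> (Name s)"
    and "well_formed \<phi> s"
  shows "ext_well_formed \<phi> s"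
proof -
  note wf1 = assms(4)[unfolded well_formed_def, THEN conjunct1, rule_format]
  note wf2a = assms(4)[unfolded well_formed_def, THEN conjunct2, THEN conjunct1]
  note wf3 = assms(4)[unfolded well_formed_def, THEN conjunct2, THEN conjunct2, rule_format]
  have insf: "\<And>y t q T. snd \<phi> y = Some t \<Longrightarrow> subt t q = Some T \<Longrightarrow> T \<in> subterms_frame \<phi>"
  proof -
    fix y t q T assume "snd \<phi> y = Some t" "subt t q = Some T"
    then have "t \<in> ran (snd \<phi>)" "T \<in> subterms t" by (auto intro: ranI simp: subterms_def)
    then show "T \<in> subterms_frame \<phi>" unfolding subterms_frame_def by blast
  qed
  have P1: "\<forall>t\<in>ran (snd \<phi>). normal_form t"
  proof
    fix t assume "t \<in> ran (snd \<phi>)"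
    then obtain y where y: "snd \<phi> y = Some t" by (auto simp: ran_def)
    show "normal_form t" unfolding normal_form_def
    proof
      assume "\<exists>u. rstep t u"
      then obtain p w f where "subt t p = Some w" "head w = Some f" "f \<in> destructors"
        using rstep_destr by blast
      then show False using wf3 insf[OF y] by blast
    qed
  qed
  have P2: "\<forall>y t q. snd \<phi> y = Some t \<longrightarrow> agent_enc (fst \<phi>) t q \<longrightarrow>
        prob_enc (ran (snd \<phi>)) t q"
    using wf1 unfolding agent_enc_def by blast
  have P3: "\<forall>y t qs. snd \<phi> y = Some t \<longrightarrow> subt t qs = Some (Name s) \<longrightarrow>
        (\<exists>q. agent_enc (fst \<phi> - {s}) t q \<and> plaintext_above t q qs)"
  proof (intro allI impI, rule ccontr)
    fix y t qs assume y: "snd \<phi> y = Some t" and qs: "subt t qs = Some (Name s)"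
      and no: "\<not> (\<exists>q. agent_enc (fst \<phi> - {s}) t q \<and> plaintext_above t q qs)"
    have "\<forall>q. enc_occ t q \<longrightarrow> \<not> pos_le (q @ [1]) qs"
      using no wf1[OF y] unfolding plaintext_above_def by blast
    moreover have "ded \<phi> t" using d_var[OF y] .
    moreover have "t \<in> subterms_frame \<phi>" using insf[OF y, of "[]"] by simp
    ultimately have "ded \<phi> (Name s)" using lemA[OF assms(4)] qs by blast
    then show False using assms(3) by blast
  qed
  have P4: "\<forall>y t qs q0. snd \<phi> y = Some t \<longrightarrow> subt t qs = Some (Name s) \<longrightarrow>
        agent_enc (fst \<phi> - {s}) t q0 \<longrightarrow> plaintext_above t q0 qs \<longrightarrow>
        (\<forall>q'. agent_enc (fst \<phi> - {s}) t q' \<and> plaintext_above t q' qs \<longrightarrow> pos_le q' q0) \<longrightarrow>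
        (\<forall>q T. pos_less q0 q \<longrightarrow> pos_less q qs \<longrightarrow> subt t q = Some T \<longrightarrow>
            head T \<in> {Some FPair, Some FSign})"
  proof (intro allI impI)
    fix y t qs q0 q T
    assume y: "snd \<phi> y = Some t" and qs: "subt t qs = Some (Name s)"
      and min: "\<forall>q'. agent_enc (fst \<phi> - {s}) t q' \<and> plaintext_above t q' qs \<longrightarrow> pos_le q' q0"
      and l1: "pos_less q0 q" and l2: "pos_less q qs" and T: "subt t q = Some T"
    obtain i r where qsd: "qs = q @ i # r" using l2 unfolding pos_less_def pos_le_def
      by (metis append.right_neutral neq_Nil_conv)
    have sT: "subt T (i # r) = Some (Name s)" using qs T qsd by (simp add: subt_append)
    have TF: "T \<in> subterms_frame \<phi>" using insf[OF y T] .
    note w2 = bspec[OF wf2a TF]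
    have notenc: "\<not> (enc_occ t q \<and> i = 1)"
    proof
      assume a: "enc_occ t q \<and> i = 1"
      then have "agent_enc (fst \<phi> - {s}) t q" using wf1[OF y] by blast
      moreover have "plaintext_above t q qs" using a qsd
        unfolding plaintext_above_def pos_le_def by auto
      ultimately have "pos_le q q0" using min by blast
      then show False using l1 unfolding pos_less_def pos_le_def by auto
    qed
    have bnd: "1 \<le> i" "i \<le> length (args T)" and oc: "occurs s (args T ! (i - 1))"
      using sT occ_of by (auto split: if_splits)
    show "head T \<in> {Some FPair, Some FSign}"
    proof (cases T)
      case (Enc a b c)
      then have "enc_occ t q" using T by (simp add: enc_occ_def)
      then have "i \<noteq> 1" using notenc by blast
      then have "i = 2 \<or> i = 3" using bnd Enc by auto
      then show ?thesis using oc Enc w2 by auto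
    next
      case (Enca a b c)
      then have "enc_occ t q" using T by (simp add: enc_occ_def)
      then have "i \<noteq> 1" using notenc by blast
      then have "i = 2 \<or> i = 3" using bnd Enca by auto
      then show ?thesis using oc Enca w2 by auto
    next
      case (Pub a)
      then have "i = 1" using bnd by auto
      then show ?thesis using oc Pub w2 by auto
    next
      case (Priv a)
      then have "i = 1" using bnd by auto
      then show ?thesis using oc Priv w2 by auto
    next
      case (Name n) then show ?thesis using bnd by simp
    next
      case (Var n) then show ?thesis using bnd by simp
    next
      case (Const n) then show ?thesis using bnd by simp
    qed (use wf3[OF TF] in \<open>simp_all add: destructors_def\<close>)
  qed
  show ?thesis unfolding ext_well_formed_def using P1 P2 P3 P4 by blast
qed

end
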